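(* Let $p$ be a complex polynomial with at least two distinct roots and $h\in\mathbb{C}\setminus\{0\}$. If all the finite fixed points of $N_{h,p}$ are superattracting, then all the roots of $p$ have the same multiplicity. Moreover, if $m$ is this common multiplicity, i.e. $p=q^m$ where $q$ is a polynomial with only simple roots, then $N_{h,p}=N_q$, where $N_q(z)=z-\frac{q(z)}{q'(z)}$ is the classical Newton map of $q$.
   Context: The relaxed Newton map is $N_{h,p}(z)=z-h\,\frac{p(z)}{p'(z)}$; its finite fixed points are the roots of $p$. A fixed point is superattracting if its multiplier is $0$. *)

theory Defs
  imports "HOL-Complex_Analysis.Complex_Analysis" "HOL-Computational_Algebra.Polynomial"
begin

text \<open>Relaxed Newton map N_{h,p}(z) = z - h p(z)/p'(z). With the HOL convention x/0 = 0
  this agrees with the holomorphic (continuously extended) map near every root of p.\<close>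
definition relaxed_newton :: "complex \<Rightarrow> complex poly \<Rightarrow> complex \<Rightarrow> complex" where
  "relaxed_newton h p z = z - h * poly p z / poly (pderiv p) z"

definition newton_map :: "complex poly \<Rightarrow> complex \<Rightarrow> complex" where
  "newton_map q z = z - poly q z / poly (pderiv q) z"

definition superattracting :: "(complex \<Rightarrow> complex) \<Rightarrow> complex \<Rightarrow> bool" where
  "superattracting f a \<longleftrightarrow> f a = a \<and> (f has_field_derivative 0) (at a)"

end

theory Submission
  imports Defs
begin

lemma key:
  fixes p :: "complex poly" and h a :: complex
  assumes p0: "p \<noteq> 0" and ra: "poly p a = 0"
    and sa: "superattracting (relaxed_newton h p) a"
  shows "h = of_nat (order a p)"
proof -
  define k where "k = order a p"
  have "k \<noteq> 0" using p0 ra order_root k_def by auto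
  then obtain n where kn: "k = Suc n" by (cases k) auto
  obtain g where pg: "p = [:-a,1:]^k * g" and nd: "\<not> [:-a,1:] dvd g"
    using order_decomp[OF p0] k_def by blast
  have ga: "poly g a \<noteq> 0" using nd by (simp add: poly_eq_0_iff_dvd)
  have dp: "pderiv p = [:-a,1:]^n * (smult (of_nat k) g + [:-a,1:] * pderiv g)"
  proof -
    have "pderiv ([:-a,1:]^Suc n) = smult (of_nat (Suc n)) ([:-a,1:]^n) * pderiv [:-a,1:]"
      by (rule pderiv_power_Suc)
    also have "pderiv [:-a,1::complex:] = 1" by (simp add: pderiv_pCons)
    finally have e: "pderiv ([:-a,1:]^Suc n) = smult (of_nat (Suc n)) ([:-a,1:]^n)" by simp
    show ?thesis unfolding pg kn pderiv_mult e
      by (simp only: power_Suc) (simp add: algebra_simps)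
  qed
  define F where "F = (\<lambda>z. z - h*((z-a)*poly g z / (of_nat k*poly g z + (z-a)*poly (pderiv g) z)))"
  have eq: "relaxed_newton h p = F"
  proof
    fix z
    show "relaxed_newton h p z = F z"
    proof (cases "z = a")
      case True
      then show ?thesis unfolding relaxed_newton_def F_def using ra by simp
    next
      case False
      have c: "(z-a)^n \<noteq> 0" using False by simp
      have "h * poly p z / poly (pderiv p) z
          = h * (((z-a)^n * ((z-a)*poly g z)) / ((z-a)^n * (of_nat k*poly g z + (z-a)*poly (pderiv g) z)))"
      proof -
        have "poly (pderiv p) z = (z-a)^n * (of_nat k*poly g z + (z-a)*poly (pderiv g) z)"
          unfolding dp by (simp add: algebra_simps)
        moreover have "poly p z = (z-a)^n * ((z-a)*poly g z)"
          unfolding pg kn by (simp add: algebra_simps)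
        ultimately show ?thesis by simp
      qed
      also have "\<dots> = h*((z-a)*poly g z / (of_nat k*poly g z + (z-a)*poly (pderiv g) z))"
        using c by (subst mult_divide_mult_cancel_left) auto
      finally show ?thesis unfolding relaxed_newton_def F_def by simp
    qed
  qed
  have D: "(F has_field_derivative (1 - h / of_nat k)) (at a)"
    unfolding F_def using ga \<open>k \<noteq> 0\<close>
    by (auto intro!: derivative_eq_intros simp: field_simps power2_eq_square)
  have "(F has_field_derivative 0) (at a)" using sa eq unfolding superattracting_def by simp
  then have "1 - h / of_nat k = 0" using D DERIV_unique by blast
  then show ?thesis using \<open>k \<noteq> 0\<close> k_def by (simp add: field_simps)
qed

theorem mainTheorem7:
  fixes p :: "complex poly" and h :: complex
  assumes "p \<noteq> 0"
    and "\<exists>a b. a \<noteq> b \<and> poly p a = 0 \<and> poly p b = 0"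
    and "h \<noteq> 0"
    and "\<forall>a. poly p a = 0 \<longrightarrow> superattracting (relaxed_newton h p) a"
  shows "\<exists>m. (\<forall>a. poly p a = 0 \<longrightarrow> order a p = m) \<and>
             (\<forall>q. rsquarefree q \<and> p = q ^ m \<longrightarrow> relaxed_newton h p = newton_map q)"
proof -
  obtain a0 where r0: "poly p a0 = 0" using assms(2) by blast
  define m where "m = order a0 p"
  have hm: "h = of_nat m" using key[OF assms(1) r0] assms(4) r0 m_def by blast
  have m0: "m \<noteq> 0" using assms(1) r0 order_root m_def by auto
  then obtain n where mn: "m = Suc n" by (cases m) auto
  have A: "\<forall>a. poly p a = 0 \<longrightarrow> order a p = m"
  proof (intro allI impI)
    fix a assume "poly p a = 0"
    then have "h = of_nat (order a p)" using key[OF assms(1)] assms(4) by blast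
    then show "order a p = m" using hm by simp
  qed
  have B: "relaxed_newton h p = newton_map q" if "p = q ^ m" for q
  proof
    fix z
    show "relaxed_newton h p z = newton_map q z"
    proof (cases "poly q z = 0")
      case True
      then show ?thesis unfolding relaxed_newton_def newton_map_def that mn by simp
    next
      case False
      have c: "of_nat m * poly q z ^ n \<noteq> 0" using False m0 by simp
      have "h * poly p z / poly (pderiv p) z
          = (of_nat m * poly q z ^ n * poly q z) / (of_nat m * poly q z ^ n * poly (pderiv q) z)"
      proof -
        have e: "pderiv (q^Suc n) = smult (of_nat (Suc n)) (q^n) * pderiv q" by (rule pderiv_power_Suc)
        show ?thesis unfolding that hm mn e by (simp add: algebra_simps)
      qed
      also have "\<dots> = poly q z / poly (pderiv q) z"
        using c by (subst mult_divide_mult_cancel_left) auto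
      finally show ?thesis unfolding relaxed_newton_def newton_map_def by simp
    qed
  qed
  show ?thesis using A B by blast
qed

end
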